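(* Let $X\subseteq\mathbb{R}^d$ be a H\"older set. Then the $c^\infty$-topology of $X$ coincides with the trace topology induced from $\mathbb{R}^d$.
   Context: The $c^\infty$-topology on $X\subseteq\mathbb{R}^d$ is the final topology with respect to all smooth curves $c:\mathbb{R}\to\mathbb{R}^d$ with $c(\mathbb{R})\subseteq X$. H\"older sets: for $0<\alpha\le1$, $r,h>0$ let $\Gamma^\alpha_d(r,h)=\{(x',x_d)\in\mathbb{R}^{d-1}\times\mathbb{R}: |x'|<r,\ h(|x'|/r)^\alpha<x_d<h\}$. An open $U$ has the uniform cusp property of index $\alpha$ if for every $x\in\partial U$ there are $\epsilon>0$, some $\Gamma=\Gamma^\alpha_d(r,h)$ and $A\in O(d)$ with $y+A\Gamma\subseteq U$ for all $y\in\overline U\cap B(x,\epsilon)$. An $\alpha$-set is a closed set $X$ with $X=\overline{\mathrm{int}(X)}\ne\emptyset$ such that $\mathrm{int}(X)$ has the uniform cusp property of index $\alpha$; a H\"older set is an $\alpha$-set for some $\alpha\in(0,1]$. *)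

theory Defs
  imports "HOL-Analysis.Analysis"
begin

definition smooth_curve :: "(real \<Rightarrow> 'a::euclidean_space) \<Rightarrow> bool" where
  "smooth_curve c \<longleftrightarrow>
     (\<exists>D :: nat \<Rightarrow> real \<Rightarrow> 'a. D 0 = c \<and>
        (\<forall>n t. (D n has_vector_derivative D (Suc n) t) (at t)))"

definition cinf_open :: "'a::euclidean_space set \<Rightarrow> 'a set \<Rightarrow> bool" where
  "cinf_open X U \<longleftrightarrow> U \<subseteq> X \<and>
     (\<forall>c. smooth_curve c \<and> range c \<subseteq> X \<longrightarrow> open (c -` U))"

text \<open>Distinguished unit vector playing the role of the last coordinate axis e_d;
  x' corresponds to x - (x.e_d) e_d.\<close>
definition e_last :: "'a::euclidean_space" where
  "e_last = (SOME b. b \<in> Basis)"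

definition holder_cusp :: "real \<Rightarrow> real \<Rightarrow> real \<Rightarrow> 'a::euclidean_space set" where
  "holder_cusp \<alpha> r h =
     {x. let x' = x - (x \<bullet> e_last) *\<^sub>R e_last; xd = x \<bullet> e_last in
         norm x' < r \<and> h * (norm x' / r) powr \<alpha> < xd \<and> xd < h}"

definition uniform_cusp_property :: "real \<Rightarrow> 'a::euclidean_space set \<Rightarrow> bool" where
  "uniform_cusp_property \<alpha> U \<longleftrightarrow>
     (\<forall>x \<in> frontier U. \<exists>\<epsilon>>0. \<exists>r>0. \<exists>h>0. \<exists>A. orthogonal_transformation A \<and>
        (\<forall>y \<in> closure U \<inter> ball x \<epsilon>. (\<lambda>z. y + A z) ` (holder_cusp \<alpha> r h :: 'a set) \<subseteq> U))"

definition alpha_set :: "real \<Rightarrow> 'a::euclidean_space set \<Rightarrow> bool" where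
  "alpha_set \<alpha> X \<longleftrightarrow> closed X \<and> X = closure (interior X) \<and> X \<noteq> {} \<and>
     uniform_cusp_property \<alpha> (interior X)"

definition holder_set :: "'a::euclidean_space set \<Rightarrow> bool" where
  "holder_set X \<longleftrightarrow> (\<exists>\<alpha>. 0 < \<alpha> \<and> \<alpha> \<le> 1 \<and> alpha_set \<alpha> X)"

end

theory Submission
  imports Defs
begin


fun ksm :: "nat \<Rightarrow> (real \<Rightarrow> real) \<Rightarrow> bool" where
  "ksm 0 f = True"
| "ksm (Suc n) f = (\<exists>f'. (\<forall>t. (f has_real_derivative f' t) (at t)) \<and> ksm n f')"

lemma ksm_mono: "ksm (Suc n) f \<Longrightarrow> ksm n f"
proof (induction n arbitrary: f)
  case 0 then show ?case by simp
next
  case (Suc n)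
  then obtain f' where "\<forall>t. (f has_real_derivative f' t) (at t)" "ksm (Suc n) f'" by auto
  then show ?case using Suc.IH by auto
qed

lemma ksm_const: "ksm n (\<lambda>t. c)"
proof (induction n arbitrary: c)
  case (Suc n) then show ?case by (auto intro!: exI[of _ "\<lambda>t. 0"] derivative_eq_intros)
qed simp

lemma ksm_add: "ksm n f \<Longrightarrow> ksm n g \<Longrightarrow> ksm n (\<lambda>t. f t + g t)"
proof (induction n arbitrary: f g)
  case (Suc n)
  then obtain f' g' where "\<forall>t. (f has_real_derivative f' t) (at t)" "ksm n f'"
    "\<forall>t. (g has_real_derivative g' t) (at t)" "ksm n g'" by auto
  then show ?case using Suc.IH by (auto intro!: exI[of _ "\<lambda>t. f' t + g' t"] derivative_eq_intros)
qed simp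

lemma ksm_mult: "ksm n f \<Longrightarrow> ksm n g \<Longrightarrow> ksm n (\<lambda>t. f t * g t)"
proof (induction n arbitrary: f g)
  case (Suc n)
  then obtain f' g' where d: "\<forall>t. (f has_real_derivative f' t) (at t)" "ksm n f'"
    "\<forall>t. (g has_real_derivative g' t) (at t)" "ksm n g'" by auto
  have "ksm n f" "ksm n g" using Suc.prems ksm_mono by auto
  then have "ksm n (\<lambda>t. f' t * g t + f t * g' t)"
    using Suc.IH d ksm_add by blast
  moreover have "\<forall>t. ((\<lambda>t. f t * g t) has_real_derivative (f' t * g t + f t * g' t)) (at t)"
    using d by (auto intro!: derivative_eq_intros)
  ultimately show ?case by auto
qed simp

lemma ksm_inverse: "ksm n g \<Longrightarrow> (\<forall>t. g t \<noteq> 0) \<Longrightarrow> ksm n (\<lambda>t. inverse (g t))"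
proof (induction n arbitrary: g)
  case (Suc n)
  then obtain g' where d: "\<forall>t. (g has_real_derivative g' t) (at t)" "ksm n g'" by auto
  have g: "ksm n g" using Suc.prems ksm_mono by auto
  have i: "ksm n (\<lambda>t. inverse (g t))" using Suc.IH g Suc.prems by blast
  have "ksm n (\<lambda>t. (-1) * (g' t * (inverse (g t) * inverse (g t))))"
    by (intro ksm_mult ksm_const d i)
  moreover have "(\<lambda>t. (-1) * (g' t * (inverse (g t) * inverse (g t)))) = (\<lambda>t. - (g' t * inverse (g t ^ 2)))"
    by (auto simp: power2_eq_square)
  moreover have "\<forall>t. ((\<lambda>t. inverse (g t)) has_real_derivative - (g' t * inverse (g t ^ 2))) (at t)"
  proof
    fix t
    show "((\<lambda>t. inverse (g t)) has_real_derivative - (g' t * inverse (g t ^ 2))) (at t)"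
      using DERIV_inverse_fun[OF d(1)[rule_format, of t]] Suc.prems by (simp add: numeral_2_eq_2)
  qed
  ultimately show ?case by auto
qed simp

lemma ksm_affine: "ksm n f \<Longrightarrow> ksm n (\<lambda>t. f (a * t + b))"
proof (induction n arbitrary: f)
  case (Suc n)
  then obtain f' where d: "\<forall>t. (f has_real_derivative f' t) (at t)" "ksm n f'" by auto
  have "ksm n (\<lambda>t. f' (a * t + b) * a)" using Suc.IH d ksm_mult ksm_const by blast
  moreover have "\<forall>t. ((\<lambda>t. f (a * t + b)) has_real_derivative f' (a * t + b) * a) (at t)"
  proof
    fix t
    have l: "((\<lambda>t. a * t + b) has_real_derivative a) (at t)" by (auto intro!: derivative_eq_intros)
    show "((\<lambda>t. f (a * t + b)) has_real_derivative f' (a * t + b) * a) (at t)"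
      using DERIV_chain2[OF d(1)[rule_format, of "a*t+b"] l] by simp
  qed
  ultimately show ?case by auto
qed simp

inductive PC :: "(real \<Rightarrow> real) \<Rightarrow> bool" where
  PC_const: "PC (\<lambda>u. c)"
| PC_add: "PC g \<Longrightarrow> PC h \<Longrightarrow> PC (\<lambda>u. g u + h u)"
| PC_cmult: "PC g \<Longrightarrow> PC (\<lambda>u. c * g u)"
| PC_x: "PC g \<Longrightarrow> PC (\<lambda>u. u * g u)"

lemma PC_deriv: "PC g \<Longrightarrow> \<exists>g'. PC g' \<and> (\<forall>u. (g has_real_derivative g' u) (at u))"
proof (induction rule: PC.induct)
  case (PC_const c)
  then show ?case by (auto intro!: exI[of _ "\<lambda>u. 0"] PC.PC_const)
next
  case (PC_add g h)
  then obtain g' h' where "PC g'" "\<forall>u. (g has_real_derivative g' u) (at u)"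
    "PC h'" "\<forall>u. (h has_real_derivative h' u) (at u)" by blast
  then show ?case by (auto intro!: exI[of _ "\<lambda>u. g' u + h' u"] PC.PC_add derivative_eq_intros)
next
  case (PC_cmult g c)
  then obtain g' where "PC g'" "\<forall>u. (g has_real_derivative g' u) (at u)" by blast
  then show ?case by (auto intro!: exI[of _ "\<lambda>u. c * g' u"] PC.PC_cmult derivative_eq_intros)
next
  case (PC_x g)
  then obtain g' where d: "PC g'" "\<forall>u. (g has_real_derivative g' u) (at u)" by blast
  have "PC (\<lambda>u. g u + u * g' u)" using PC_x d by (intro PC.PC_add PC.PC_x)
  moreover have "\<forall>u. ((\<lambda>u. u * g u) has_real_derivative g u + u * g' u) (at u)"
    using d by (auto intro!: derivative_eq_intros)
  ultimately show ?case by blast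
qed

lemma PC_exp_lim: "PC g \<Longrightarrow> \<forall>m. ((\<lambda>u. u ^ m * g u * exp (- u)) \<longlongrightarrow> 0) at_top"
proof (induction rule: PC.induct)
  case (PC_const c)
  show ?case
  proof
    fix m
    have "((\<lambda>u. c * (u ^ m / exp u)) \<longlongrightarrow> c * 0) at_top"
      by (intro tendsto_mult tendsto_const tendsto_power_div_exp_0)
    then show "((\<lambda>u. u ^ m * c * exp (- u)) \<longlongrightarrow> 0) at_top"
      by (simp add: exp_minus field_simps)
  qed
next
  case (PC_add g h)
  show ?case
  proof
    fix m
    have "((\<lambda>u. u ^ m * g u * exp (- u) + u ^ m * h u * exp (- u)) \<longlongrightarrow> 0 + 0) at_top"
      using PC_add.IH by (intro tendsto_add) auto
    then show "((\<lambda>u. u ^ m * (g u + h u) * exp (- u)) \<longlongrightarrow> 0) at_top"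
      by (simp add: algebra_simps)
  qed
next
  case (PC_cmult g c)
  show ?case
  proof
    fix m
    have "((\<lambda>u. c * (u ^ m * g u * exp (- u))) \<longlongrightarrow> c * 0) at_top"
      using PC_cmult.IH by (intro tendsto_mult tendsto_const) auto
    then show "((\<lambda>u. u ^ m * (c * g u) * exp (- u)) \<longlongrightarrow> 0) at_top"
      by (simp add: algebra_simps)
  qed
next
  case (PC_x g)
  show ?case
  proof
    fix m
    have "((\<lambda>u. u ^ Suc m * g u * exp (- u)) \<longlongrightarrow> 0) at_top" using PC_x.IH by blast
    then show "((\<lambda>u. u ^ m * (u * g u) * exp (- u)) \<longlongrightarrow> 0) at_top"
      by (simp add: algebra_simps)
  qed
qed

definition hp :: "(real \<Rightarrow> real) \<Rightarrow> real \<Rightarrow> real" where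
  "hp p t = (if t > 0 then p (1 / t) * exp (- (1 / t)) else 0)"

lemma hp_deriv:
  assumes "PC p" "\<forall>u. (p has_real_derivative p' u) (at u)"
  shows "(hp p has_real_derivative hp (\<lambda>u. u * (u * (p u + (-1) * p' u))) t) (at t)"
proof (cases "t > 0")
  case True
  have pd: "((\<lambda>t. p (1 / t)) has_real_derivative p' (1/t) * (- 1 / t^2)) (at t)"
  proof -
    have l: "((\<lambda>t. 1 / t) has_real_derivative (- 1 / t^2)) (at t)"
      using True by (auto intro!: derivative_eq_intros simp: power2_eq_square field_simps)
    show ?thesis using DERIV_chain2[OF assms(2)[rule_format, of "1/t"] l] .
  qed
  have "((\<lambda>t. p (1 / t) * exp (- (1 / t))) has_real_derivative
      (p' (1/t) * (- 1 / t^2)) * exp (- (1 / t)) + p (1 / t) * (exp (- (1 / t)) * (1 / t^2))) (at t)"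
  proof -
    have l: "((\<lambda>t. 1 / t) has_real_derivative (- 1 / t^2)) (at t)"
      using True by (auto intro!: derivative_eq_intros simp: power2_eq_square field_simps)
    have "((\<lambda>t. - (1 / t)) has_real_derivative - (- 1 / t^2)) (at t)" by (rule DERIV_minus[OF l])
    then have m: "((\<lambda>t. - (1 / t)) has_real_derivative 1 / t^2) (at t)" by simp
    have ed: "((\<lambda>t. exp (- (1 / t))) has_real_derivative exp (- (1 / t)) * (1 / t^2)) (at t)"
      using DERIV_chain2[OF DERIV_exp m] .
    show ?thesis using DERIV_mult'[OF pd ed] by (simp add: algebra_simps)
  qed
  moreover have "(p' (1/t) * (- 1 / t^2)) * exp (- (1 / t)) + p (1 / t) * (exp (- (1 / t)) * (1 / t^2))
      = hp (\<lambda>u. u * (u * (p u + (-1) * p' u))) t"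
    using True by (simp add: hp_def algebra_simps power2_eq_square)
  ultimately have d: "((\<lambda>t. p (1 / t) * exp (- (1 / t))) has_real_derivative hp (\<lambda>u. u * (u * (p u + (-1) * p' u))) t) (at t)"
    by simp
  show ?thesis
  proof -
    have o: "open {0::real<..}" by simp
    have tS: "t \<in> {0<..}" using True by simp
    have eq: "\<And>x. x \<in> {0<..} \<Longrightarrow> p (1 / x) * exp (- (1 / x)) = hp p x" by (simp add: hp_def)
    show ?thesis by (rule has_field_derivative_transform_within_open[OF d o tS eq])
  qed
next
  case False
  show ?thesis
  proof (cases "t < 0")
    case True
    have d: "((\<lambda>_. 0) has_real_derivative 0) (at t)" by simp
    have o: "open {..<0::real}" by simp
    have tS: "t \<in> {..<0}" using True by simp
    have eq: "\<And>x. x \<in> {..<0} \<Longrightarrow> (\<lambda>_. 0) x = hp p x" by (simp add: hp_def)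
    have "(hp p has_real_derivative 0) (at t)"
      by (rule has_field_derivative_transform_within_open[OF d o tS eq])
    then show ?thesis using True by (simp add: hp_def)
  next
    case False
    with \<open>\<not> t > 0\<close> have t: "t = 0" by simp
    have "((\<lambda>y. (hp p y - hp p 0) / (y - 0)) \<longlongrightarrow> 0) (at 0)"
      unfolding filterlim_at_split
    proof
      show "((\<lambda>y. (hp p y - hp p 0) / (y - 0)) \<longlongrightarrow> 0) (at_left 0)"
        by (rule tendsto_eventually) (auto simp: hp_def eventually_at_left_field intro: exI[of _ "-1"])
    next
      have lim: "((\<lambda>u. u ^ 1 * p u * exp (- u)) \<longlongrightarrow> 0) at_top" using PC_exp_lim[OF assms(1)] by blast
      have "((\<lambda>y. (\<lambda>u. u ^ 1 * p u * exp (- u)) (inverse y)) \<longlongrightarrow> 0) (at_right 0)"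
        using filterlim_compose[OF lim filterlim_inverse_at_top_right] .
      then show "((\<lambda>y. (hp p y - hp p 0) / (y - 0)) \<longlongrightarrow> 0) (at_right 0)"
        apply (rule tendsto_cong[THEN iffD1, rotated])
        apply (auto simp: hp_def eventually_at_right_field intro!: exI[of _ 1])
        by (simp add: divide_inverse)
    qed
    then have "(hp p has_real_derivative 0) (at 0)"
      by (simp add: has_field_derivative_iff)
    then show ?thesis using t by (simp add: hp_def)
  qed
qed

lemma ksm_hp: "PC p \<Longrightarrow> ksm n (hp p)"
proof (induction n arbitrary: p)
  case (Suc n)
  then obtain p' where d: "PC p'" "\<forall>u. (p has_real_derivative p' u) (at u)" using PC_deriv by blast
  have "PC (\<lambda>u. u * (u * (p u + (-1) * p' u)))"
    using Suc.prems d by (intro PC.intros)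
  then show ?case using hp_deriv[OF Suc.prems d(2)] Suc.IH by auto
qed simp



lemma ksm_deriv:
  assumes "\<forall>n. ksm n g"
  shows "(\<forall>n. ksm n (deriv g)) \<and> (\<forall>t. (g has_real_derivative deriv g t) (at t))"
proof
  show "\<forall>n. ksm n (deriv g)"
  proof
    fix n
    obtain g' where "\<forall>t. (g has_real_derivative g' t) (at t)" "ksm n g'"
      using assms[rule_format, of "Suc n"] by auto
    moreover then have "deriv g = g'" by (auto intro!: ext DERIV_imp_deriv)
    ultimately show "ksm n (deriv g)" by simp
  qed
  obtain g' where "\<forall>t. (g has_real_derivative g' t) (at t)"
    using assms[rule_format, of "Suc 0"] by auto
  then show "\<forall>t. (g has_real_derivative deriv g t) (at t)"
    by (metis DERIV_imp_deriv)
qed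

lemma ksm_smooth:
  assumes "\<forall>n. ksm n g"
  shows "\<forall>m. (\<forall>n. ksm n ((deriv ^^ m) g)) \<and> (\<forall>t. ((deriv ^^ m) g has_real_derivative (deriv ^^ Suc m) g t) (at t))"
proof
  fix m
  have "\<forall>n. ksm n ((deriv ^^ m) g)"
    by (induction m) (use assms ksm_deriv in auto)
  then show "(\<forall>n. ksm n ((deriv ^^ m) g)) \<and> (\<forall>t. ((deriv ^^ m) g has_real_derivative (deriv ^^ Suc m) g t) (at t))"
    using ksm_deriv by auto
qed

definition f0 :: "real \<Rightarrow> real" where "f0 = hp (\<lambda>u. 1)"

lemma f0_pos: "t > 0 \<Longrightarrow> f0 t > 0" and f0_zero: "t \<le> 0 \<Longrightarrow> f0 t = 0" and f0_nonneg: "f0 t \<ge> 0"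
  by (auto simp: f0_def hp_def)

definition phi :: "real \<Rightarrow> real" where
  "phi t = f0 t * inverse (f0 t + f0 ((-1) * t + 1))"

lemma phi_den: "f0 t + f0 ((-1) * t + 1) > 0"
proof (cases "t > 0")
  case True then show ?thesis using f0_pos[of t] f0_nonneg[of "(-1) * t + 1"] by linarith
next
  case False then show ?thesis using f0_pos[of "(-1) * t + 1"] f0_nonneg[of t] by linarith
qed

lemma ksm_phi: "ksm n phi"
proof -
  have "ksm n (\<lambda>t. f0 t * inverse (f0 t + f0 ((-1) * t + 1)))"
    apply (intro ksm_mult ksm_inverse ksm_add ksm_affine)
    using ksm_hp[OF PC_const] phi_den unfolding f0_def by (auto simp: less_le)
  then show ?thesis unfolding phi_def[abs_def] .
qed

lemma phi_0: "t \<le> 0 \<Longrightarrow> phi t = 0"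
  by (simp add: phi_def f0_zero)

lemma phi_1: "t \<ge> 1 \<Longrightarrow> phi t = 1"
proof -
  assume "t \<ge> 1"
  then have "f0 ((-1) * t + 1) = 0" "f0 t > 0" using f0_zero f0_pos by auto
  then show ?thesis by (simp add: phi_def)
qed

lemma phi_range: "0 \<le> phi t \<and> phi t \<le> 1"
proof -
  have d: "f0 t + f0 ((-1) * t + 1) > 0" by (rule phi_den)
  have "f0 t \<le> f0 t + f0 ((-1) * t + 1)" using f0_nonneg by simp
  then show ?thesis using d f0_nonneg[of t]
    by (simp add: phi_def divide_inverse[symmetric] divide_le_eq_1)
qed

lemma deriv_zero_const:
  assumes "open S" "t \<in> S" "\<forall>s\<in>S. g s = c" "(g has_real_derivative d) (at t)"
  shows "d = 0"
proof -
  have d: "((\<lambda>_. c) has_real_derivative 0) (at t)" by simp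
  have eq: "\<And>s. s \<in> S \<Longrightarrow> (\<lambda>_. c) s = g s" using assms(3) by simp
  have "(g has_real_derivative 0) (at t)"
    by (rule has_field_derivative_transform_within_open[OF d assms(1,2) eq])
  then show ?thesis using assms(4) DERIV_unique by blast
qed

definition Phi :: "nat \<Rightarrow> real \<Rightarrow> real" where "Phi n = (deriv ^^ n) phi"

lemma Phi_deriv: "(Phi n has_real_derivative Phi (Suc n) t) (at t)"
  using ksm_smooth[of phi] ksm_phi unfolding Phi_def by blast

lemma Phi_0: "Phi 0 = phi" by (simp add: Phi_def)

lemma Phi_out: "t < 0 \<or> t > 1 \<Longrightarrow> Phi (Suc n) t = 0"
proof (induction n arbitrary: t)
  case 0
  show ?case
  proof (cases "t < 0")
    case True
    show ?thesis using deriv_zero_const[of "{..<0}" t "Phi 0" 0 "Phi (Suc 0) t"] True Phi_deriv[of 0 t]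
      by (auto simp: Phi_0 phi_0)
  next
    case False
    then have "t > 1" using 0 by auto
    then show ?thesis using deriv_zero_const[of "{1<..}" t "Phi 0" 1 "Phi (Suc 0) t"] Phi_deriv[of 0 t]
      by (auto simp: Phi_0 phi_1)
  qed
next
  case (Suc n)
  show ?case
  proof (cases "t < 0")
    case True
    show ?thesis using deriv_zero_const[of "{..<0}" t "Phi (Suc n)" 0 "Phi (Suc (Suc n)) t"] True
      Phi_deriv[of "Suc n" t] Suc.IH by auto
  next
    case False
    then have "t > 1" using Suc by auto
    then show ?thesis using deriv_zero_const[of "{1<..}" t "Phi (Suc n)" 0 "Phi (Suc (Suc n)) t"]
      Phi_deriv[of "Suc n" t] Suc.IH by auto
  qed
qed

lemma Phi_bounded: "\<exists>M. \<forall>t. \<bar>Phi n t\<bar> \<le> M"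
proof (cases n)
  case 0 then show ?thesis using phi_range by (auto simp: Phi_0 intro!: exI[of _ 1])
next
  case (Suc m)
  have "continuous_on {0..1} (Phi n)"
    using Phi_deriv by (intro continuous_at_imp_continuous_on) (auto intro: DERIV_isCont)
  then have "compact (Phi n ` {0..1})" by (intro compact_continuous_image) auto
  then obtain B where B: "\<forall>y \<in> Phi n ` {0..1}. norm y \<le> B"
    using compact_imp_bounded bounded_iff by metis
  show ?thesis
  proof (intro exI allI)
    fix t
    show "\<bar>Phi n t\<bar> \<le> max B 0"
    proof (cases "t < 0 \<or> t > 1")
      case True then show ?thesis using Phi_out Suc by auto
    next
      case False
      then have "t \<in> {0..1}" by auto
      then have "norm (Phi n t) \<le> B" using B by blast
      then show ?thesis by simp
    qed
  qed
qed



lemma series_vderiv: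
  fixes f f' :: "nat \<Rightarrow> real \<Rightarrow> 'a::banach"
  assumes der: "\<And>k t. (f k has_vector_derivative f' k t) (at t)"
    and bnd: "\<And>k t. norm (f' k t) \<le> M k" and sM: "summable M"
    and sf: "\<And>t. summable (\<lambda>k. f k t)"
  shows "((\<lambda>t. \<Sum>k. f k t) has_vector_derivative (\<Sum>k. f' k t)) (at t)"
proof -
  have ul: "uniform_limit UNIV (\<lambda>n x. \<Sum>i<n. f' i x) (\<lambda>x. \<Sum>i. f' i x) sequentially"
    by (rule Weierstrass_m_test[OF bnd sM])
  have "\<exists>g. \<forall>x\<in>UNIV. (\<lambda>n. f n x) sums (g x) \<and>
      (g has_derivative (\<lambda>h. h *\<^sub>R (\<Sum>i. f' i x))) (at x within UNIV)"
  proof (rule has_derivative_series[where f' = "\<lambda>k x h. h *\<^sub>R f' k x"])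
    show "\<And>n x. x \<in> UNIV \<Longrightarrow> (f n has_derivative (\<lambda>h. h *\<^sub>R f' n x)) (at x within UNIV)"
      using der by (simp add: has_vector_derivative_def)
    show "(\<lambda>n. f n t) sums (\<Sum>k. f k t)" using sf by (simp add: summable_sums)
  next
    fix e :: real assume "e > 0"
    then have "\<forall>\<^sub>F n in sequentially. \<forall>x\<in>UNIV. dist (\<Sum>i<n. f' i x) (\<Sum>i. f' i x) < e"
      using ul unfolding uniform_limit_iff by blast
    then show "\<forall>\<^sub>F n in sequentially. \<forall>x\<in>UNIV. \<forall>h. norm ((\<Sum>i<n. h *\<^sub>R f' i x) - h *\<^sub>R (\<Sum>i. f' i x)) \<le> e * norm h"
    proof (rule eventually_mono)
      fix n assume a: "\<forall>x\<in>UNIV. dist (\<Sum>i<n. f' i x) (\<Sum>i. f' i x) < e"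
      show "\<forall>x\<in>UNIV. \<forall>h. norm ((\<Sum>i<n. h *\<^sub>R f' i x) - h *\<^sub>R (\<Sum>i. f' i x)) \<le> e * norm h"
      proof (intro ballI allI)
        fix x h
        have "norm ((\<Sum>i<n. h *\<^sub>R f' i x) - h *\<^sub>R (\<Sum>i. f' i x)) = \<bar>h\<bar> * norm ((\<Sum>i<n. f' i x) - (\<Sum>i. f' i x))"
          by (simp add: scaleR_sum_right[symmetric] scaleR_diff_right[symmetric])
        also have "\<dots> \<le> \<bar>h\<bar> * e"
        proof -
          have "norm ((\<Sum>i<n. f' i x) - (\<Sum>i. f' i x)) < e" using a by (simp add: dist_norm)
          then show ?thesis by (intro mult_left_mono) auto
        qed
        finally show "norm ((\<Sum>i<n. h *\<^sub>R f' i x) - h *\<^sub>R (\<Sum>i. f' i x)) \<le> e * norm h"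
          by (simp add: mult.commute)
      qed
    qed
  qed auto
  then obtain g where g: "\<And>x. (\<lambda>n. f n x) sums (g x)"
    "\<And>x. (g has_derivative (\<lambda>h. h *\<^sub>R (\<Sum>i. f' i x))) (at x)" by auto
  have "g = (\<lambda>t. \<Sum>k. f k t)" using g(1) sums_unique by (auto intro!: ext)
  then show ?thesis using g(2) by (simp add: has_vector_derivative_def)
qed

lemma summable_fast:
  fixes c :: real assumes "c \<ge> 0"
  shows "summable (\<lambda>k. c ^ k * (1/2) ^ (k * k))"
proof -
  obtain N where N: "(1/2::real) ^ N < 1 / (2 * c + 1)"
    using real_arch_pow_inv[of "1 / (2 * c + 1)" "1/2"] assms by auto
  show ?thesis
  proof (rule summable_comparison_test'[where N = N])
    show "summable (\<lambda>k. (1/2::real) ^ k)" by (rule summable_geometric) simp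
  next
    fix k assume "N \<le> k"
    then have "(1/2::real) ^ k \<le> (1/2) ^ N" by (intro power_decreasing) auto
    then have "(1/2::real) ^ k \<le> 1 / (2 * c + 1)" using N by linarith
    then have "c * (1/2::real) ^ k \<le> c * (1 / (2 * c + 1))" using assms
      by (intro mult_left_mono) auto
    also have "\<dots> \<le> 1/2" using assms by (simp add: field_simps)
    finally have le: "c * (1/2::real) ^ k \<le> 1/2" .
    have "c ^ k * (1/2::real) ^ (k * k) = (c * (1/2) ^ k) ^ k"
      by (simp add: power_mult_distrib power_mult)
    also have "\<dots> \<le> (1/2) ^ k" using le assms by (intro power_mono) auto
    finally show "norm (c ^ k * (1/2::real) ^ (k * k)) \<le> (1/2) ^ k" using assms by simp
  qed
qed

lemma half_pow_mono: "m \<le> n \<Longrightarrow> (1/2::real) ^ n \<le> (1/2) ^ m"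
  by (intro power_decreasing) auto

lemma two_half_1: "(2::real) ^ Suc k * (1/2) ^ Suc k = 1"
  by (simp add: power_one_over)
lemma two_half_2: "(2::real) ^ Suc k * (1/2) ^ k = 2"
  by (simp add: power_one_over)

lemma curve_through:
  fixes v :: "nat \<Rightarrow> 'a::euclidean_space"
  assumes vb: "\<forall>k. norm (v k - x) \<le> (1/2) ^ (k * k)"
    and seg: "\<forall>k. closed_segment (v k) (v (Suc k)) \<subseteq> X" and xX: "x \<in> X"
  shows "\<exists>c. smooth_curve c \<and> range c \<subseteq> X \<and> c 0 = x \<and> (\<forall>k. c ((1/2) ^ k) = v k)"
proof -
  define w where "w k = v k - v (Suc k)" for k
  define a :: "nat \<Rightarrow> real" where "a k = 2 ^ Suc k" for k
  define F where "F n k t = (a k ^ n * Phi n (a k * t - 1)) *\<^sub>R w k" for n k t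
  define D where "D n t = (if n = 0 then x else 0) + (\<Sum>k. F n k t)" for n t
  obtain M where M: "\<And>n t. \<bar>Phi n t\<bar> \<le> M n"
    using Phi_bounded by metis
  have M0: "M n \<ge> 0" for n using M[of n 0] by linarith
  have wb: "norm (w k) \<le> 2 * (1/2) ^ (k * k)" for k
  proof -
    have "norm (w k) \<le> norm (v k - x) + norm (v (Suc k) - x)"
      unfolding w_def by (rule order_trans[OF _ norm_triangle_ineq4]) (simp add: algebra_simps)
    also have "\<dots> \<le> (1/2) ^ (k * k) + (1/2) ^ (k * k)"
      using vb half_pow_mono[of "k*k" "Suc k * Suc k"] by (intro add_mono) (auto intro: order_trans)
    finally show ?thesis by simp
  qed
  define B where "B n k = (a k ^ n * M n) * (2 * (1/2) ^ (k * k))" for n k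
  have Fb: "norm (F n k t) \<le> B n k" for n k t
  proof -
    have "norm (F n k t) = a k ^ n * \<bar>Phi n (a k * t - 1)\<bar> * norm (w k)"
      by (simp add: F_def a_def abs_mult)
    also have "\<dots> \<le> a k ^ n * M n * (2 * (1/2) ^ (k * k))"
      using M wb M0 by (intro mult_mono) (auto simp: a_def)
    finally show ?thesis by (simp add: B_def)
  qed
  have sB: "summable (B n)" for n
  proof -
    have "B n = (\<lambda>k. (M n * 2 * 2 ^ n) * ((2 ^ n) ^ k * (1/2) ^ (k * k)))"
      by (auto simp: B_def a_def power_mult[symmetric] power_add[symmetric] mult.commute intro!: ext)
    then show ?thesis using summable_fast[of "2 ^ n"] by (simp add: summable_mult)
  qed
  have sF: "summable (\<lambda>k. F n k t)" for n t
    using summable_comparison_test[of "\<lambda>k. F n k t" "B n"] Fb sB by auto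
  have Fd: "(F n k has_vector_derivative F (Suc n) k t) (at t)" for n k t
  proof -
    have l: "((\<lambda>t. a k * t - 1) has_real_derivative a k) (at t)" by (auto intro!: derivative_eq_intros)
    have "((\<lambda>t. Phi n (a k * t - 1)) has_real_derivative Phi (Suc n) (a k * t - 1) * a k) (at t)"
      using DERIV_chain2[OF Phi_deriv l] by simp
    then have "((\<lambda>t. a k ^ n * Phi n (a k * t - 1)) has_real_derivative a k ^ n * (Phi (Suc n) (a k * t - 1) * a k)) (at t)"
      by (rule DERIV_cmult)
    from has_vector_derivative_scaleR[OF this has_vector_derivative_const[of "w k"]]
    show ?thesis by (simp add: F_def[abs_def] mult_ac)
  qed
  have Dd: "(D n has_vector_derivative D (Suc n) t) (at t)" for n t
  proof -
    have "((\<lambda>t. \<Sum>k. F n k t) has_vector_derivative (\<Sum>k. F (Suc n) k t)) (at t)"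
      by (rule series_vderiv[OF Fd Fb sB sF])
    from has_vector_derivative_add[OF has_vector_derivative_const this]
    show ?thesis unfolding D_def[abs_def] by simp
  qed
  have sm: "smooth_curve (D 0)"
    unfolding smooth_curve_def using Dd by blast
  have F0: "F 0 k t = phi (a k * t - 1) *\<^sub>R w k" for k t by (simp add: F_def Phi_0)
  have vlim: "v \<longlonglongrightarrow> x"
  proof -
    have "(\<lambda>k. v k - x) \<longlonglongrightarrow> 0"
    proof (rule Lim_null_comparison[where g = "\<lambda>k. (1/2) ^ k"])
      show "\<forall>\<^sub>F k in sequentially. norm (v k - x) \<le> (1/2) ^ k"
        using vb half_pow_mono[of k "k*k" for k] by (auto intro!: always_eventually intro: order_trans)
      show "(\<lambda>k. (1/2::real) ^ k) \<longlonglongrightarrow> 0" by (rule LIMSEQ_power_zero) simp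
    qed
    then show ?thesis by (rule LIM_zero_cancel)
  qed
  have tele: "(\<lambda>i. w (i + j)) sums (v j - x)" for j
  proof -
    have "(\<lambda>n. v (n + j)) \<longlonglongrightarrow> x" using LIMSEQ_ignore_initial_segment[OF vlim] .
    from sums_minus[OF telescope_sums[OF this]] show ?thesis by (simp add: w_def)
  qed
  have mid: "(\<Sum>k. F 0 k t) = (v (Suc m) - x) + phi (a m * t - 1) *\<^sub>R w m"
    if t1: "(1/2) ^ Suc m \<le> t" and t2: "t \<le> (1/2) ^ m" for m t
  proof -
    define g where "g k = (if k \<le> m then 0 else w k)" for k
    have "(\<lambda>i. g (i + Suc m)) sums (v (Suc m) - x)" using tele[of "Suc m"] by (simp add: g_def)
    then have gs0: "g sums ((v (Suc m) - x) + (\<Sum>i<Suc m. g i))" by (rule sums_iff_shift[THEN iffD1])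
    have "(\<Sum>i<Suc m. g i) = 0" by (simp add: g_def)
    then have gs: "g sums (v (Suc m) - x)" using gs0 by simp
    have eq: "F 0 k t = g k + (if k = m then phi (a m * t - 1) *\<^sub>R w m else 0)" for k
    proof (cases k m rule: linorder_cases)
      case less
      then have "a k * t \<le> a k * (1/2) ^ Suc k"
        using t2 half_pow_mono[of "Suc k" m] by (intro mult_left_mono) (auto simp: a_def)
      then have "a k * t - 1 \<le> 0" using two_half_1[of k] unfolding a_def by linarith
      then show ?thesis using less by (simp add: F0 phi_0 g_def)
    next
      case equal then show ?thesis by (simp add: F0 g_def)
    next
      case greater
      then have "a k * (1/2) ^ k \<le> a k * t"
        using t1 half_pow_mono[of "Suc m" k] by (intro mult_left_mono) (auto simp: a_def)
      then have "a k * t - 1 \<ge> 1" using two_half_2[of k] unfolding a_def by linarith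
      then show ?thesis using greater by (simp add: F0 phi_1 g_def)
    qed
    have "(\<lambda>k. F 0 k t) sums ((v (Suc m) - x) + phi (a m * t - 1) *\<^sub>R w m)"
      unfolding eq by (intro sums_add gs sums_single)
    then show ?thesis by (rule sums_unique[symmetric])
  qed
  have Dmid: "D 0 t = v (Suc m) + phi (a m * t - 1) *\<^sub>R (v m - v (Suc m))"
    if "(1/2) ^ Suc m \<le> t" "t \<le> (1/2) ^ m" for m t
    using mid[OF that] by (simp add: D_def w_def)
  have D00: "D 0 t = x" if "t \<le> 0" for t
  proof -
    have "F 0 k t = 0" for k
    proof -
      have "a k * t \<le> 0" using that by (simp add: a_def mult_nonneg_nonpos)
      then show ?thesis by (simp add: F0 phi_0)
    qed
    then show ?thesis by (simp add: D_def)
  qed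
  have D01: "D 0 t = v 0" if "t \<ge> 1" for t
  proof -
    have "F 0 k t = w k" for k
    proof -
      have "a k \<ge> 2" by (simp add: a_def)
      then have "a k * t \<ge> 2 * 1" using that by (intro mult_mono) auto
      then show ?thesis by (simp add: F0 phi_1)
    qed
    moreover have "(\<Sum>k. w k) = v 0 - x" using tele[of 0] sums_unique by fastforce
    ultimately show ?thesis by (simp add: D_def)
  qed
  have rng: "D 0 t \<in> X" for t
  proof -
    consider "t \<le> 0" | "t \<ge> 1" | "0 < t" "t < 1" by linarith
    then show ?thesis
    proof cases
      case 1 then show ?thesis using D00 xX by simp
    next
      case 2 then show ?thesis using D01 seg[rule_format, of 0] by auto
    next
      case 3
      obtain n where n: "(1/2::real) ^ n < t" using real_arch_pow_inv[of t "1/2"] 3 by auto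
      define N where "N = (LEAST n. (1/2::real) ^ n < t)"
      have N1: "(1/2::real) ^ N < t" unfolding N_def by (rule LeastI[of _ n]) (rule n)
      have "N \<noteq> 0" proof assume "N = 0" then show False using N1 3 by simp qed
      then obtain m where m: "N = Suc m" using not0_implies_Suc by blast
      have "\<not> (1/2::real) ^ m < t" using not_less_Least[of m "\<lambda>n. (1/2::real) ^ n < t"] m
        unfolding N_def by auto
      then have t1: "(1/2) ^ Suc m \<le> t" "t \<le> (1/2) ^ m" using N1 m by auto
      define u where "u = phi (a m * t - 1)"
      have u: "0 \<le> u" "u \<le> 1" using phi_range unfolding u_def by auto
      have "D 0 t = (1 - (1 - u)) *\<^sub>R v m + (1 - u) *\<^sub>R v (Suc m)"
        using Dmid[OF t1] unfolding u_def by (simp add: algebra_simps)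
      then have "D 0 t \<in> closed_segment (v m) (v (Suc m))"
        unfolding in_segment using u by (intro exI[of _ "1 - u"]) auto
      then show ?thesis using seg by blast
    qed
  qed
  have vals: "D 0 ((1/2) ^ k) = v k" for k
  proof -
    have "a k * (1/2) ^ k - 1 = 1" using two_half_2[of k] unfolding a_def by linarith
    then show ?thesis using Dmid[of k "(1/2) ^ k"] by (simp add: phi_1)
  qed
  show ?thesis
    using sm rng D00[of 0] vals by (intro exI[of _ "D 0"]) auto
qed



lemma e_last_Basis: "e_last \<in> Basis" and norm_e_last: "norm (e_last :: 'a::euclidean_space) = 1"
  unfolding e_last_def by (auto simp: SOME_Basis)

lemma cusp_open:
  assumes "\<alpha> > 0" "r > 0"
  shows "open (holder_cusp \<alpha> r h :: 'a::euclidean_space set)"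
proof -
  define N where "N x = norm (x - (x \<bullet> e_last) *\<^sub>R e_last)" for x :: 'a
  have cN: "continuous_on UNIV N" unfolding N_def by (intro continuous_intros)
  have cP: "continuous_on UNIV (\<lambda>x. h * (N x / r) powr \<alpha>)"
    using assms by (intro continuous_intros continuous_on_powr' cN) (auto simp: N_def)
  have "holder_cusp \<alpha> r h = {x. N x < r} \<inter> {x. h * (N x / r) powr \<alpha> < x \<bullet> e_last} \<inter> {x. x \<bullet> e_last < h}"
    by (auto simp: holder_cusp_def N_def Let_def)
  moreover have "open {x. N x < r}" using cN by (intro open_Collect_less) auto
  moreover have "open {x. h * (N x / r) powr \<alpha> < x \<bullet> e_last}" using cP
    by (intro open_Collect_less) (auto intro: continuous_intros)
  moreover have "open {x::'a. x \<bullet> e_last < h}" by (intro open_Collect_less) (auto intro: continuous_intros)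
  ultimately show ?thesis by auto
qed

lemma axis_in_cusp:
  assumes "0 < s" "s < h" "r > 0"
  shows "s *\<^sub>R e_last \<in> (holder_cusp \<alpha> r h :: 'a::euclidean_space set)"
proof -
  have "(e_last::'a) \<bullet> e_last = 1" using norm_e_last[where 'a='a] by (simp add: norm_eq_1)
  then show ?thesis using assms by (simp add: holder_cusp_def Let_def)
qed

lemma smooth_cont: "smooth_curve c \<Longrightarrow> continuous (at t) c"
  unfolding smooth_curve_def using has_vector_derivative_continuous by metis

lemma bad_seq:
  fixes X :: "'a::euclidean_space set"
  assumes hs: "holder_set X" and xX: "x \<in> X"
    and bad: "\<forall>e>0. \<exists>y\<in>X. dist y x < e \<and> y \<notin> U"
  shows "\<exists>v. (\<forall>k. norm (v k - x) \<le> (1/2) ^ (k * k)) \<and>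
      (\<forall>k. closed_segment (v k) (v (Suc k)) \<subseteq> X) \<and> (\<forall>N. \<exists>k\<ge>N. v k \<notin> U)"
proof -
  obtain \<alpha> where \<alpha>: "0 < \<alpha>" "closed X" "X = closure (interior X)"
      "uniform_cusp_property \<alpha> (interior X)"
    using hs unfolding holder_set_def alpha_set_def by auto
  show ?thesis
  proof (cases "x \<in> interior X")
    case True
    then obtain d0 where d0: "d0 > 0" "ball x d0 \<subseteq> X"
      using mem_interior by blast
    have "\<forall>k. \<exists>y\<in>X. dist y x < min d0 ((1/2) ^ (k * k)) \<and> y \<notin> U"
    proof
      fix k
      have "min d0 ((1/2) ^ (k * k)) > 0" using d0 by simp
      then show "\<exists>y\<in>X. dist y x < min d0 ((1/2) ^ (k * k)) \<and> y \<notin> U"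
        using bad by blast
    qed
    then obtain y where y: "\<And>k. y k \<in> X" "\<And>k. dist (y k) x < min d0 ((1/2) ^ (k * k))" "\<And>k. y k \<notin> U"
      by metis
    show ?thesis
    proof (rule exI[of _ y], intro conjI allI)
      fix k
      show "norm (y k - x) \<le> (1/2) ^ (k * k)" using y(2)[of k] by (simp add: dist_norm)
      have "y k \<in> ball x d0" "y (Suc k) \<in> ball x d0"
        using y(2) by (auto simp: dist_commute)
      then show "closed_segment (y k) (y (Suc k)) \<subseteq> X"
        using closed_segment_subset[of "y k" "ball x d0" "y (Suc k)"] d0 by auto
    next
      fix N show "\<exists>k\<ge>N. y k \<notin> U" using y(3) by auto
    qed
  next
    case False
    have "x \<in> frontier (interior X)"
      using False xX \<alpha>(3) by (simp add: frontier_def)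
    then obtain \<epsilon> r h A where cusp: "\<epsilon> > 0" "r > 0" "h > 0" "orthogonal_transformation A"
      "\<forall>y \<in> closure (interior X) \<inter> ball x \<epsilon>. (\<lambda>z. y + A z) ` (holder_cusp \<alpha> r h :: 'a set) \<subseteq> interior X"
      using \<alpha>(4) unfolding uniform_cusp_property_def by blast
    have cl: "closure (interior X) = X" using \<alpha>(3) by simp
    have linA: "linear A" using cusp(4) orthogonal_transformation_linear by blast
    define e' where "e' = A e_last"
    have inX: "y + A z \<in> X" if "y \<in> X" "dist y x < \<epsilon>" "z \<in> holder_cusp \<alpha> r h" for y z
      using cusp(5) that interior_subset cl by (force simp: dist_commute)
    have axis: "closed_segment y (y + s *\<^sub>R e') \<subseteq> X"
      if "y \<in> X" "dist y x < \<epsilon>" "0 < s" "s < h" for y s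
    proof
      fix p assume "p \<in> closed_segment y (y + s *\<^sub>R e')"
      then obtain u where u: "0 \<le> u" "u \<le> 1" "p = (1 - u) *\<^sub>R y + u *\<^sub>R (y + s *\<^sub>R e')"
        unfolding in_segment by auto
      have p: "p = y + (u * s) *\<^sub>R e'" using u(3) by (simp add: algebra_simps)
      show "p \<in> X"
      proof (cases "u = 0")
        case True then show ?thesis using p that by simp
      next
        case False
        then have "u > 0" using u(1) by simp
        then have us0: "0 < u * s" using that(3) by simp
        have "u * s \<le> 1 * s" using u(2) that(3) by (intro mult_right_mono) auto
        then have "u * s < h" using that(4) by simp
        with us0 have "(u * s) *\<^sub>R e_last \<in> holder_cusp \<alpha> r h" using axis_in_cusp cusp(2) by blast
        then have "y + A ((u * s) *\<^sub>R e_last) \<in> X" using inX that by blast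
        then show ?thesis using p linA by (simp add: e'_def linear_cmul)
      qed
    qed
    have horiz: "closed_segment (y + s *\<^sub>R e') (y' + s *\<^sub>R e') \<subseteq> X"
      if "y \<in> X" "dist y x < \<epsilon>" "ball (s *\<^sub>R (e_last::'a)) \<rho> \<subseteq> holder_cusp \<alpha> r h"
        "norm (y' - y) < \<rho>" for y y' s \<rho>
    proof
      fix p assume "p \<in> closed_segment (y + s *\<^sub>R e') (y' + s *\<^sub>R e')"
      then obtain u where u: "0 \<le> u" "u \<le> 1" "p = (1 - u) *\<^sub>R (y + s *\<^sub>R e') + u *\<^sub>R (y' + s *\<^sub>R e')"
        unfolding in_segment by auto
      obtain d where d: "A d = y' - y"
        using orthogonal_transformation_surj[OF cusp(4)] by (metis surjD)
      have nd: "norm d = norm (y' - y)" using d orthogonal_transformation_norm[OF cusp(4)] by metis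
      define z where "z = s *\<^sub>R e_last + u *\<^sub>R d"
      have "dist (s *\<^sub>R e_last) z = u * norm d" using u by (simp add: z_def dist_norm)
      also have "\<dots> \<le> norm d" using u by (simp add: mult_left_le_one_le)
      finally have "z \<in> ball (s *\<^sub>R e_last) \<rho>" using nd that(4) by simp
      then have "z \<in> holder_cusp \<alpha> r h" using that(3) by blast
      then have "y + A z \<in> X" using inX[OF that(1,2)] by blast
      moreover have "y + A z = p"
      proof -
        have Az: "A z = s *\<^sub>R e' + u *\<^sub>R A d"
          using linA by (simp add: z_def e'_def linear_add linear_cmul)
        have pp: "p = y + s *\<^sub>R e' + u *\<^sub>R (y' - y)" using u(3) by (simp add: algebra_simps)
        show ?thesis unfolding Az pp d by simp
      qed
      ultimately show "p \<in> X" by simp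
    qed
    define s where "s j = min (h/2) ((1/2) ^ ((3*j+2)*(3*j+2)) / 2)" for j :: nat
    have s: "0 < s j" "s j < h" "s j \<le> (1/2) ^ ((3*j+2)*(3*j+2)) / 2" for j
      using cusp(3) by (auto simp: s_def)
    have "\<forall>j. \<exists>\<rho>>0. ball (s j *\<^sub>R (e_last::'a)) \<rho> \<subseteq> holder_cusp \<alpha> r h"
    proof
      fix j
      have "s j *\<^sub>R e_last \<in> (holder_cusp \<alpha> r h :: 'a set)" using axis_in_cusp s cusp(2) by blast
      then show "\<exists>\<rho>>0. ball (s j *\<^sub>R (e_last::'a)) \<rho> \<subseteq> holder_cusp \<alpha> r h"
        using cusp_open[OF \<alpha>(1) cusp(2)] open_contains_ball by blast
    qed
    then obtain \<rho> where \<rho>: "\<And>j. \<rho> j > 0" "\<And>j. ball (s j *\<^sub>R (e_last::'a)) (\<rho> j) \<subseteq> holder_cusp \<alpha> r h"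
      by metis
    define \<rho>m where "\<rho>m j = Min (\<rho> ` {..j})" for j
    have \<rho>m: "\<rho>m j > 0" "\<And>i. i \<le> j \<Longrightarrow> \<rho>m j \<le> \<rho> i" for j
      using \<rho>(1) by (auto simp: \<rho>m_def)
    define \<beta> :: "nat \<Rightarrow> real" where "\<beta> j = (1/2) ^ ((3*j+2)*(3*j+2))" for j
    have "\<forall>j. \<exists>y\<in>X. dist y x < min \<epsilon> (min (\<beta> j / 2) (\<rho>m j / 2)) \<and> y \<notin> U"
    proof
      fix j
      have "min \<epsilon> (min (\<beta> j / 2) (\<rho>m j / 2)) > 0" using cusp(1) \<rho>m(1) by (simp add: \<beta>_def)
      then show "\<exists>y\<in>X. dist y x < min \<epsilon> (min (\<beta> j / 2) (\<rho>m j / 2)) \<and> y \<notin> U"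
        using bad by blast
    qed
    then obtain y where y: "\<And>j. y j \<in> X" "\<And>j. dist (y j) x < min \<epsilon> (min (\<beta> j / 2) (\<rho>m j / 2))"
      "\<And>j. y j \<notin> U"
      by metis
    have \<beta>mono: "\<beta> (Suc j) \<le> \<beta> j" for j
      unfolding \<beta>_def by (intro half_pow_mono mult_le_mono) auto
    have ne': "norm e' = 1" using orthogonal_transformation_norm[OF cusp(4)] norm_e_last
      by (metis e'_def)
    define V where "V j i = (if i = 0 then y j else if i = 1 then y j + s j *\<^sub>R e' else y (Suc j) + s j *\<^sub>R e')"
      for j i :: nat
    define v where "v k = V (k div 3) (k mod 3)" for k
    have vV: "v (3 * j + i) = V j i" if "i < 3" for i j
      using that by (simp add: v_def)
    have vV3: "v (3 * j + 3) = V (Suc j) 0" for j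
      using vV[of 0 "Suc j"] by (simp add: add.commute)
    have dyx: "norm (y j - x) \<le> \<beta> j / 2" for j using y(2)[of j] by (simp add: dist_norm)
    have Vb: "norm (V j i - x) \<le> \<beta> j" for j i
    proof -
      have a: "norm (y j - x) \<le> \<beta> j / 2" by (rule dyx)
      have b: "norm (y (Suc j) - x) \<le> \<beta> j / 2" using dyx[of "Suc j"] \<beta>mono[of j] by linarith
      have c: "norm (s j *\<^sub>R e') \<le> \<beta> j / 2" using s[of j] ne' by (simp add: \<beta>_def)
      have d1: "norm (y j + s j *\<^sub>R e' - x) \<le> norm (y j - x) + norm (s j *\<^sub>R e')"
        by (rule order_trans[OF _ norm_triangle_ineq]) (simp add: algebra_simps)
      have d2: "norm (y (Suc j) + s j *\<^sub>R e' - x) \<le> norm (y (Suc j) - x) + norm (s j *\<^sub>R e')"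
        by (rule order_trans[OF _ norm_triangle_ineq]) (simp add: algebra_simps)
      have e0: "norm (y j - x) \<le> \<beta> j" using a norm_ge_zero[of "y j - x"] by linarith
      have e1: "norm (y j + s j *\<^sub>R e' - x) \<le> \<beta> j" using d1 a c by linarith
      have e2: "norm (y (Suc j) + s j *\<^sub>R e' - x) \<le> \<beta> j" using d2 b c by linarith
      show ?thesis using e0 e1 e2 by (simp add: V_def)
    qed
    show ?thesis
    proof (rule exI[of _ v], intro conjI allI)
      fix k :: nat
      define j where "j = k div 3"
      have k: "k = 3 * j + k mod 3" "k mod 3 < 3" unfolding j_def by auto
      have "k \<le> 3 * j + 2" using k by linarith
      then have "k * k \<le> (3*j+2)*(3*j+2)" by (intro mult_le_mono)
      then have "\<beta> j \<le> (1/2) ^ (k * k)" unfolding \<beta>_def by (rule half_pow_mono)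
      moreover have "v k = V j (k mod 3)" unfolding v_def j_def ..
      ultimately show "norm (v k - x) \<le> (1/2) ^ (k * k)" using Vb[of j "k mod 3"] by simp
    next
      fix N :: nat show "\<exists>k\<ge>N. v k \<notin> U"
        using vV[of 0 N] y(3)[of N] by (intro exI[of _ "3 * N"]) (auto simp: V_def)
    next
      fix k :: nat
      define j where "j = k div 3"
      have ey: "dist (y i) x < \<epsilon>" for i using y(2)[of i] by simp
      have k: "k = 3 * j + k mod 3" "k mod 3 < 3" unfolding j_def by auto
      consider "k mod 3 = 0" | "k mod 3 = 1" | "k mod 3 = 2" by linarith
      then show "closed_segment (v k) (v (Suc k)) \<subseteq> X"
      proof cases
        case 1
        then have "v k = y j" "v (Suc k) = y j + s j *\<^sub>R e'"
          using vV[of 0 j] vV[of 1 j] k by (auto simp: V_def)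
        then show ?thesis using axis[OF y(1) ey s(1,2)] by simp
      next
        case 2
        then have "v k = y j + s j *\<^sub>R e'" "v (Suc k) = y (Suc j) + s j *\<^sub>R e'"
          using vV[of 1 j] vV[of 2 j] k by (auto simp: V_def)
        moreover have "norm (y (Suc j) - y j) < \<rho> j"
        proof -
          have "norm (y (Suc j) - y j) \<le> norm (y (Suc j) - x) + norm (y j - x)"
            by (rule order_trans[OF _ norm_triangle_ineq4]) (simp add: algebra_simps)
          moreover have "norm (y (Suc j) - x) < \<rho>m (Suc j) / 2" "norm (y j - x) < \<rho>m j / 2"
            using y(2) by (auto simp: dist_norm)
          moreover have "\<rho>m (Suc j) \<le> \<rho> j" "\<rho>m j \<le> \<rho> j" using \<rho>m(2) by auto
          ultimately show ?thesis by linarith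
        qed
        ultimately show ?thesis using horiz[OF y(1) ey \<rho>(2)] by simp
      next
        case 3
        then have "v k = y (Suc j) + s j *\<^sub>R e'" "v (Suc k) = y (Suc j)"
        proof -
          have kk: "k = 3 * j + 2" "Suc k = 3 * j + 3" using k 3 by auto
          show "v k = y (Suc j) + s j *\<^sub>R e'" using vV[of 2 j] kk by (simp add: V_def)
          have "v (Suc k) = V (Suc j) 0" using vV3[of j] kk(2) by metis
          then show "v (Suc k) = y (Suc j)" by (simp add: V_def)
        qed
        then show ?thesis using axis[OF y(1) ey s(1,2)] by (simp add: closed_segment_commute)
      qed
    qed
  qed
qed

theorem proposition3p6:
  fixes X :: "'a::euclidean_space set"
  assumes "holder_set X"
  shows "\<forall>U. cinf_open X U \<longleftrightarrow> openin (top_of_set X) U"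
proof
  fix U
  show "cinf_open X U \<longleftrightarrow> openin (top_of_set X) U"
  proof
    assume co: "cinf_open X U"
    have UX: "U \<subseteq> X" using co by (simp add: cinf_open_def)
    show "openin (top_of_set X) U"
      unfolding openin_euclidean_subtopology_iff
    proof (intro conjI ballI UX)
      fix x assume xU: "x \<in> U"
      show "\<exists>e>0. \<forall>x'\<in>X. dist x' x < e \<longrightarrow> x' \<in> U"
      proof (rule ccontr)
        assume "\<not> ?thesis"
        then have bad: "\<forall>e>0. \<exists>y\<in>X. dist y x < e \<and> y \<notin> U" by auto
        obtain v where v: "\<forall>k. norm (v k - x) \<le> (1/2) ^ (k * k)"
          "\<forall>k. closed_segment (v k) (v (Suc k)) \<subseteq> X" "\<forall>N. \<exists>k\<ge>N. v k \<notin> U"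
          using bad_seq[OF assms _ bad] xU UX by blast
        obtain c where c: "smooth_curve c" "range c \<subseteq> X" "c 0 = x" "\<forall>k. c ((1/2) ^ k) = v k"
          using curve_through[OF v(1) v(2)] xU UX by blast
        have "open (c -` U)" using co c by (simp add: cinf_open_def)
        moreover have "0 \<in> c -` U" using c xU by simp
        ultimately obtain d where d: "d > 0" "ball 0 d \<subseteq> c -` U"
          using open_contains_ball by blast
        obtain N where N: "(1/2::real) ^ N < d" using real_arch_pow_inv[of d "1/2"] d by auto
        obtain k where k: "k \<ge> N" "v k \<notin> U" using v(3) by blast
        have "(1/2::real) ^ k \<le> (1/2) ^ N" using half_pow_mono[OF k(1)] .
        then have "(1/2::real) ^ k < d" using N by linarith
        then have "(1/2::real) ^ k \<in> ball 0 d" by simp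
        then have "c ((1/2) ^ k) \<in> U" using d by blast
        then show False using c(4) k by simp
      qed
    qed
  next
    assume "openin (top_of_set X) U"
    then obtain T where T: "open T" "U = X \<inter> T" by (auto simp: openin_open)
    show "cinf_open X U"
      unfolding cinf_open_def
    proof (intro conjI allI impI)
      show "U \<subseteq> X" using T by auto
      fix c :: "real \<Rightarrow> 'a" assume c: "smooth_curve c \<and> range c \<subseteq> X"
      then have "c -` U = c -` T" using T by auto
      moreover have "open (c -` T)"
        using continuous_open_vimage[OF T(1)] smooth_cont c by blast
      ultimately show "open (c -` U)" by simp
    qed
  qed
qed


end
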